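(* Fix $0<\epsilon<1$. Let $A\in\mathbb{R}^{m\times n}$ have i.i.d. $\mathcal{N}(0,1/m)$ entries with rows $\{a_\ell\}_{\ell=1}^m$, and let $Z$ be a $k$-dimensional subspace of $\mathbb{R}^n$. Let $E_{Z,A}$ be the event that there exists a set $Z_0\subset Z$ such that: each $z_0\in Z_0$ satisfies $\langle a_\ell,z_0\rangle\neq0$ for all $\ell\in[m]$; $|Z_0|\leqslant10m^{2k}$; and for all $z\in Z$ with $\|z\|=1$ there exists $z_0\in Z_0$ with $\|z-z_0\|\leqslant\epsilon$. There are positive absolute constants $C_2,c$ and a constant $\hat C$ depending polynomially on $\epsilon^{-1}$ such that if $m\geqslant\hat Ck$, then $\mathbb{P}(E_{Z,A})\geqslant1-C_2\exp(-c\epsilon m)$. *)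

theory Defs
  imports "HOL-Probability.Probability"
begin

text \<open>Vectors of R^n are modelled as functions nat => real vanishing outside {..<n}.\<close>

definition Rn :: "nat \<Rightarrow> (nat \<Rightarrow> real) set" where
  "Rn n = {x. \<forall>i\<ge>n. x i = 0}"

definition vinner :: "nat \<Rightarrow> (nat \<Rightarrow> real) \<Rightarrow> (nat \<Rightarrow> real) \<Rightarrow> real" where
  "vinner n x y = (\<Sum>i<n. x i * y i)"

definition vnorm :: "nat \<Rightarrow> (nat \<Rightarrow> real) \<Rightarrow> real" where
  "vnorm n x = sqrt (\<Sum>i<n. (x i)\<^sup>2)"

definition subspace_dim :: "nat \<Rightarrow> nat \<Rightarrow> (nat \<Rightarrow> real) set \<Rightarrow> bool" where
  "subspace_dim n k Z \<longleftrightarrow>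
     (\<exists>v :: nat \<Rightarrow> nat \<Rightarrow> real.
        (\<forall>j<k. v j \<in> Rn n) \<and>
        (\<forall>c :: nat \<Rightarrow> real. (\<forall>i. (\<Sum>j<k. c j * v j i) = 0) \<longrightarrow> (\<forall>j<k. c j = 0)) \<and>
        Z = {z. \<exists>c :: nat \<Rightarrow> real. z = (\<lambda>i. \<Sum>j<k. c j * v j i)})"

text \<open>The random m x n matrix A with i.i.d. N(0,1/m) entries (standard deviation 1/sqrt m),
  as a product measure over the index set {..<m} x {..<n}; row l is (\<lambda>j. A (l,j)).\<close>

definition gauss_matrix :: "nat \<Rightarrow> nat \<Rightarrow> (nat \<times> nat \<Rightarrow> real) measure" where
  "gauss_matrix m n =
     PiM ({..<m} \<times> {..<n}) (\<lambda>_. density lborel (normal_density 0 (1 / sqrt (real m))))"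

definition event_E :: "real \<Rightarrow> nat \<Rightarrow> nat \<Rightarrow> nat \<Rightarrow> (nat \<Rightarrow> real) set \<Rightarrow> (nat \<times> nat \<Rightarrow> real) \<Rightarrow> bool" where
  "event_E \<epsilon> m n k Z A \<longleftrightarrow>
     (\<exists>Z0. Z0 \<subseteq> Z \<and> finite Z0 \<and>
        (\<forall>z0\<in>Z0. \<forall>l<m. vinner n (\<lambda>j. A (l, j)) z0 \<noteq> 0) \<and>
        real (card Z0) \<le> 10 * real m ^ (2 * k) \<and>
        (\<forall>z\<in>Z. vnorm n z = 1 \<longrightarrow> (\<exists>z0\<in>Z0. vnorm n (\<lambda>i. z i - z0 i) \<le> \<epsilon>)))"

end

theory Submission
  imports Defs
begin

definition lc :: "nat \<Rightarrow> (nat \<Rightarrow> real) \<Rightarrow> (nat \<Rightarrow> nat \<Rightarrow> real) \<Rightarrow> nat \<Rightarrow> real" where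
  "lc k c v = (\<lambda>i. \<Sum>j<k. c j * v j i)"

definition ON :: "nat \<Rightarrow> nat \<Rightarrow> (nat \<Rightarrow> nat \<Rightarrow> real) \<Rightarrow> bool" where
  "ON n k e \<longleftrightarrow> (\<forall>i<k. \<forall>j<k. vinner n (e i) (e j) = (if i = j then 1 else 0))"

lemma lc_Suc: "lc (Suc k) c v = (\<lambda>i. lc k c v i + c k * v k i)"
  by (simp add: lc_def)

lemma lc_cong: "(\<And>j. j < k \<Longrightarrow> c j = d j) \<Longrightarrow> (\<And>j. j < k \<Longrightarrow> x j = y j) \<Longrightarrow> lc k c x = lc k d y"
  unfolding lc_def by (intro ext sum.cong) auto

lemma lc_comp:
  assumes "\<And>j. j < k \<Longrightarrow> x j = lc k' (D j) v"
  shows "lc k c x = lc k' (\<lambda>j'. \<Sum>j<k. c j * D j j') v"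
proof -
  have "lc k c x = (\<lambda>i. \<Sum>j<k. c j * (\<Sum>j'<k'. D j j' * v j' i))"
    unfolding lc_def using assms by (intro ext sum.cong) (auto simp: lc_def)
  also have "\<dots> = lc k' (\<lambda>j'. \<Sum>j<k. c j * D j j') v"
    unfolding lc_def sum_distrib_left sum_distrib_right by (intro ext, subst sum.swap) (simp add: mult.assoc)
  finally show ?thesis .
qed

lemma lc_Rn: "(\<And>j. j < k \<Longrightarrow> v j \<in> Rn n) \<Longrightarrow> lc k c v \<in> Rn n"
  by (simp add: lc_def Rn_def)

lemma vinner_lc_left: "vinner n (lc k c e) y = (\<Sum>j<k. c j * vinner n (e j) y)"
  unfolding vinner_def lc_def sum_distrib_left sum_distrib_right by (subst sum.swap) (simp add: mult.assoc)

lemma vinner_sym: "vinner n x y = vinner n y x"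
  unfolding vinner_def by (simp add: mult.commute)

lemma vinner_diff_left: "vinner n (\<lambda>i. x i - y i) z = vinner n x z - vinner n y z"
  unfolding vinner_def by (simp add: left_diff_distrib sum_subtractf)

lemma vinner_scale_left: "vinner n (\<lambda>i. x i / s) z = vinner n x z / s"
  unfolding vinner_def by (simp add: sum_divide_distrib)

lemma vnorm_L2: "vnorm n x = L2_set x {..<n}"
  by (simp add: vnorm_def L2_set_def)

lemma vnorm_inner: "vnorm n x = sqrt (vinner n x x)"
  by (simp add: vnorm_def vinner_def power2_eq_square)

lemma vinner_lc_lc:
  assumes "ON n k e"
  shows "vinner n (lc k c e) (lc k d e) = (\<Sum>j<k. c j * d j)"
proof -
  have h: "\<And>j. vinner n (e j) (lc k d e) = (\<Sum>j'<k. d j' * vinner n (e j') (e j))"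
    by (subst vinner_sym) (rule vinner_lc_left)
  have "vinner n (lc k c e) (lc k d e) = (\<Sum>j<k. c j * (\<Sum>j'<k. d j' * vinner n (e j') (e j)))"
    by (simp add: vinner_lc_left h)
  also have "\<dots> = (\<Sum>j<k. c j * d j)"
  proof (intro sum.cong refl)
    fix j assume j: "j \<in> {..<k}"
    have "(\<Sum>j'<k. d j' * vinner n (e j') (e j)) = (\<Sum>j'<k. if j' = j then d j' else 0)"
      using assms j unfolding ON_def by (intro sum.cong) auto
    also have "\<dots> = d j" using j by (simp add: sum.delta)
    finally show "c j * (\<Sum>j'<k. d j' * vinner n (e j') (e j)) = c j * d j" by simp
  qed
  finally show ?thesis .
qed

lemma vnorm_lc:
  assumes "ON n k e"
  shows "vnorm n (lc k c e) = L2_set c {..<k}"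
  using vinner_lc_lc[OF assms, of c c] by (simp add: vnorm_inner L2_set_def power2_eq_square)


lemma gs:
  assumes "\<forall>j<k. v j \<in> Rn n" "\<forall>c. (\<forall>i. lc k c v i = 0) \<longrightarrow> (\<forall>j<k. c j = 0)"
  shows "\<exists>e. (\<forall>j<k. e j \<in> Rn n) \<and> ON n k e \<and> (\<forall>j<k. \<exists>d. e j = lc k d v) \<and> (\<forall>j<k. \<exists>d. v j = lc k d e)"
  using assms
proof (induction k)
  case 0
  show ?case by (auto simp: ON_def)
next
  case (Suc k)
  have vR: "\<forall>j<k. v j \<in> Rn n" using Suc.prems by auto
  have ind: "\<forall>c. (\<forall>i. lc k c v i = 0) \<longrightarrow> (\<forall>j<k. c j = 0)"
  proof (intro allI impI)
    fix c j assume h: "\<forall>i. lc k c v i = 0" and j: "j < k"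
    have "lc (Suc k) (c(k := 0)) v = lc k c v"
      unfolding lc_Suc by (simp add: lc_cong[of k "c(k := 0)" c v v])
    then have "\<forall>i. lc (Suc k) (c(k := 0)) v i = 0" using h by simp
    then have "\<forall>j<Suc k. (c(k := 0)) j = 0" using Suc.prems(2) by blast
    then have "(c(k := 0)) j = 0" using j less_SucI by blast
    then show "c j = 0" using j by simp
  qed
  obtain e where eR: "\<forall>j<k. e j \<in> Rn n" and eON: "ON n k e"
    and eD: "\<forall>j<k. \<exists>d. e j = lc k d v" and vE: "\<forall>j<k. \<exists>d. v j = lc k d e"
    using Suc.IH[OF vR ind] by blast
  from eD obtain D where D: "\<And>j. j < k \<Longrightarrow> e j = lc k (D j) v" by metis
  from vE obtain E where E: "\<And>j. j < k \<Longrightarrow> v j = lc k (E j) e" by metis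
  define \<alpha> where "\<alpha> j = vinner n (v k) (e j)" for j
  define u where "u = (\<lambda>i. v k i - lc k \<alpha> e i)"
  have lcae: "lc k \<alpha> e = lc k (\<lambda>j'. \<Sum>j<k. \<alpha> j * D j j') v"
    by (rule lc_comp) (rule D)
  have u_nz: "\<exists>i. u i \<noteq> 0"
  proof (rule ccontr)
    assume "\<not> ?thesis"
    then have u0: "\<And>i. u i = 0" by simp
    define c where "c = (\<lambda>j'. \<Sum>j<k. \<alpha> j * D j j')(k := -1)"
    have "lc (Suc k) c v = (\<lambda>i. lc k (\<lambda>j'. \<Sum>j<k. \<alpha> j * D j j') v i - v k i)"
      unfolding lc_Suc c_def by (simp add: lc_cong[of k "_(k := -1)" "\<lambda>j'. \<Sum>j<k. \<alpha> j * D j j'" v v])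
    also have "\<dots> = (\<lambda>i. 0)" using u0 unfolding u_def lcae[symmetric] by (simp add: fun_eq_iff)
    finally have "\<forall>i. lc (Suc k) c v i = 0" by simp
    then have "c k = 0" using Suc.prems(2) by blast
    then show False unfolding c_def by simp
  qed
  have lR: "lc k \<alpha> e \<in> Rn n" by (rule lc_Rn) (use eR in blast)
  have vkR: "v k \<in> Rn n" using Suc.prems(1) by blast
  have uR: "u \<in> Rn n"
    unfolding Rn_def u_def
  proof (intro CollectI allI impI)
    fix i assume "n \<le> i"
    then show "v k i - lc k \<alpha> e i = 0" using lR vkR unfolding Rn_def by simp
  qed
  define s where "s = vnorm n u"
  have nn: "vinner n u u \<ge> 0" unfolding vinner_def by (intro sum_nonneg) simp
  have uu: "vinner n u u = s\<^sup>2"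
    unfolding s_def vnorm_inner using nn by simp
  have s_pos: "s > 0"
  proof -
    obtain i where i: "u i \<noteq> 0" using u_nz by blast
    have "i < n"
    proof (rule ccontr)
      assume "\<not> i < n"
      then have "u i = 0" using uR unfolding Rn_def by simp
      then show False using i by simp
    qed
    then have "0 < (\<Sum>i<n. u i * u i)" using i by (intro sum_pos2[of _ i]) (auto simp: zero_less_mult_iff linorder_neq_iff)
    then show ?thesis unfolding s_def vnorm_inner vinner_def by simp
  qed
  have ue: "vinner n u (e j) = 0" if j: "j < k" for j
  proof -
    have "vinner n u (e j) = \<alpha> j - (\<Sum>j'<k. \<alpha> j' * vinner n (e j') (e j))"
      unfolding u_def vinner_diff_left vinner_lc_left \<alpha>_def by simp
    also have "(\<Sum>j'<k. \<alpha> j' * vinner n (e j') (e j)) = (\<Sum>j'<k. if j' = j then \<alpha> j' else 0)"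
      using eON j unfolding ON_def by (intro sum.cong) auto
    also have "\<dots> = \<alpha> j" using j by (simp add: sum.delta)
    finally show ?thesis by simp
  qed
  define e' where "e' = e(k := (\<lambda>i. u i / s))"
  show ?case
  proof (intro exI[of _ e'] conjI allI impI)
    fix j assume j: "j < Suc k"
    show "e' j \<in> Rn n"
      using j eR uR unfolding e'_def Rn_def by (auto simp: less_Suc_eq)
  next
    show "ON n (Suc k) e'"
      unfolding ON_def
    proof (intro allI impI)
      fix i j assume i: "i < Suc k" and j: "j < Suc k"
      show "vinner n (e' i) (e' j) = (if i = j then 1 else 0)"
      proof (cases "i = k")
        case True
        show ?thesis
        proof (cases "j = k")
          case True
          have "vinner n (\<lambda>i. u i / s) (\<lambda>i. u i / s) = vinner n u u / s\<^sup>2"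
            unfolding vinner_def by (simp add: sum_divide_distrib power2_eq_square)
          then show ?thesis using \<open>i = k\<close> True s_pos uu unfolding e'_def by simp
        next
          case False
          then have "j < k" using j by simp
          then show ?thesis using \<open>i = k\<close> False ue unfolding e'_def
            by (simp add: vinner_scale_left)
        qed
      next
        case False
        then have ik: "i < k" using i by simp
        show ?thesis
        proof (cases "j = k")
          case True
          have "vinner n (e i) (\<lambda>i. u i / s) = 0"
            by (subst vinner_sym) (simp add: vinner_scale_left ue ik)
          then show ?thesis using ik True unfolding e'_def by simp
        next
          case False
          then show ?thesis using ik j eON unfolding e'_def ON_def by simp
        qed
      qed
    qed
  next
    fix j assume j: "j < Suc k"
    show "\<exists>d. e' j = lc (Suc k) d v"
    proof (cases "j = k")
      case True
      define d where "d = (\<lambda>j'. - (\<Sum>j<k. \<alpha> j * D j j') / s)(k := 1 / s)"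
      have "lc (Suc k) d v = (\<lambda>i. - lc k (\<lambda>j'. \<Sum>j<k. \<alpha> j * D j j') v i / s + v k i / s)"
        unfolding lc_Suc d_def by (simp add: lc_def sum_divide_distrib[symmetric] sum_negf)
      also have "\<dots> = e' j"
        unfolding e'_def u_def True lcae[symmetric] by (simp add: fun_eq_iff diff_divide_distrib)
      finally show ?thesis by metis
    next
      case False
      then have jk: "j < k" using j by simp
      have "e' j = lc k (D j) v" using D jk False unfolding e'_def by simp
      also have "\<dots> = lc (Suc k) ((D j)(k := 0)) v"
        unfolding lc_Suc by (simp add: lc_cong[of k "(D j)(k := 0)" "D j" v v])
      finally show ?thesis by metis
    qed
  next
    fix j assume j: "j < Suc k"
    show "\<exists>d. v j = lc (Suc k) d e'"
    proof (cases "j = k")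
      case True
      have "lc (Suc k) (\<alpha>(k := s)) e' = (\<lambda>i. lc k \<alpha> e i + s * (u i / s))"
        unfolding lc_Suc e'_def by (simp add: lc_cong[of k "\<alpha>(k := s)" \<alpha> "e(k := _)" e])
      also have "\<dots> = v j" using s_pos unfolding u_def True by (simp add: fun_eq_iff)
      finally show ?thesis by metis
    next
      case False
      then have jk: "j < k" using j by simp
      have "v j = lc k (E j) e" using E jk by simp
      also have "\<dots> = lc (Suc k) ((E j)(k := 0)) e'"
        unfolding lc_Suc e'_def by (simp add: lc_cong[of k "(E j)(k := 0)" "E j" "e(k := _)" e])
      finally show ?thesis by metis
    qed
  qed
qed


lemma vinner_add_scale_right: "vinner n x (\<lambda>i. p i + t * w i) = vinner n x p + t * vinner n x w"
  unfolding vinner_def by (simp add: distrib_left sum.distrib sum_distrib_left mult.left_commute)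

lemma perturb:
  assumes L: "finite L" and aw: "\<forall>l\<in>L. vinner n (a l) w \<noteq> 0" and eta: "\<eta> > 0"
  shows "\<exists>t>0. t * vnorm n w \<le> \<eta> \<and> (\<forall>l\<in>L. vinner n (a l) (\<lambda>i. p i + t * w i) \<noteq> 0)"
proof -
  define B where "B = (\<lambda>l. - vinner n (a l) p / vinner n (a l) w) ` L"
  define T where "T = {0<..<\<eta> / (vnorm n w + 1)}"
  have wn: "vnorm n w \<ge> 0" unfolding vnorm_L2 by simp
  have "0 < \<eta> / (vnorm n w + 1)" using eta wn by simp
  then have "infinite T" unfolding T_def by (rule infinite_Ioo)
  moreover have "finite B" unfolding B_def using L by simp
  ultimately obtain t where tT: "t \<in> T" and tB: "t \<notin> B"
    by (metis finite_subset subsetI)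
  have t0: "t > 0" using tT unfolding T_def by simp
  have "t * (vnorm n w + 1) < \<eta>" using tT wn unfolding T_def by (simp add: pos_less_divide_eq)
  then have tw: "t * vnorm n w \<le> \<eta>" using t0 by (simp add: distrib_left)
  have "\<forall>l\<in>L. vinner n (a l) (\<lambda>i. p i + t * w i) \<noteq> 0"
  proof
    fix l assume l: "l \<in> L"
    show "vinner n (a l) (\<lambda>i. p i + t * w i) \<noteq> 0"
    proof
      assume "vinner n (a l) (\<lambda>i. p i + t * w i) = 0"
      then have "vinner n (a l) p + t * vinner n (a l) w = 0" by (simp add: vinner_add_scale_right)
      then have "t = - vinner n (a l) p / vinner n (a l) w" using aw l by (simp add: field_simps)
      then show False using tB l unfolding B_def by blast
    qed
  qed
  then show ?thesis using t0 tw by blast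
qed

lemma L2_set_abs_le:
  assumes "finite A" "j \<in> A"
  shows "\<bar>c j\<bar> \<le> L2_set c A"
proof -
  have "(c j)\<^sup>2 \<le> (\<Sum>i\<in>A. (c i)\<^sup>2)" using assms by (intro member_le_sum) auto
  then have "sqrt ((c j)\<^sup>2) \<le> sqrt (\<Sum>i\<in>A. (c i)\<^sup>2)" by (rule real_sqrt_le_mono)
  then show ?thesis unfolding L2_set_def by simp
qed

lemma net:
  assumes Z: "subspace_dim n k Z" and k: "k \<ge> 1" and eps: "0 < \<epsilon>"
    and wZ: "w \<in> Z" and wa: "\<forall>l<(m::nat). vinner n (a l) w \<noteq> 0"
    and N: "N = nat \<lceil>2 * sqrt (real k) / \<epsilon>\<rceil>"
  shows "\<exists>Z0. Z0 \<subseteq> Z \<and> finite Z0 \<and> (\<forall>z0\<in>Z0. \<forall>l<m. vinner n (a l) z0 \<noteq> 0) \<and>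
           card Z0 \<le> (2 * N + 1) ^ k \<and>
           (\<forall>z\<in>Z. vnorm n z = 1 \<longrightarrow> (\<exists>z0\<in>Z0. vnorm n (\<lambda>i. z i - z0 i) \<le> \<epsilon>))"
proof -
  obtain v where vR: "\<forall>j<k. v j \<in> Rn n"
    and vind: "\<forall>c :: nat \<Rightarrow> real. (\<forall>i. (\<Sum>j<k. c j * v j i) = 0) \<longrightarrow> (\<forall>j<k. c j = 0)"
    and Zv: "Z = {z. \<exists>c :: nat \<Rightarrow> real. z = (\<lambda>i. \<Sum>j<k. c j * v j i)}"
    using Z unfolding subspace_dim_def by blast
  have vind': "\<forall>c. (\<forall>i. lc k c v i = 0) \<longrightarrow> (\<forall>j<k. c j = 0)" using vind unfolding lc_def by simp
  obtain e where eR: "\<forall>j<k. e j \<in> Rn n" and eON: "ON n k e"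
    and eD: "\<forall>j<k. \<exists>d. e j = lc k d v" and vE: "\<forall>j<k. \<exists>d. v j = lc k d e"
    using gs[OF vR vind'] by blast
  from eD obtain D where D: "\<And>j. j < k \<Longrightarrow> e j = lc k (D j) v" by metis
  from vE obtain E where E: "\<And>j. j < k \<Longrightarrow> v j = lc k (E j) e" by metis
  have Zv': "Z = range (\<lambda>c. lc k c v)" unfolding Zv lc_def by auto
  have Ze: "Z = range (\<lambda>c. lc k c e)"
  proof
    show "Z \<subseteq> range (\<lambda>c. lc k c e)"
    proof
      fix z assume "z \<in> Z"
      then obtain c where "z = lc k c v" unfolding Zv' by blast
      also have "\<dots> = lc k (\<lambda>j'. \<Sum>j<k. c j * E j j') e" by (rule lc_comp) (rule E)
      finally show "z \<in> range (\<lambda>c. lc k c e)" by blast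
    qed
  next
    show "range (\<lambda>c. lc k c e) \<subseteq> Z"
    proof
      fix z assume "z \<in> range (\<lambda>c. lc k c e)"
      then obtain c where "z = lc k c e" by blast
      also have "\<dots> = lc k (\<lambda>j'. \<Sum>j<k. c j * D j j') v" by (rule lc_comp) (rule D)
      finally show "z \<in> Z" unfolding Zv' by blast
    qed
  qed
  obtain d0 where d0: "w = lc k d0 e" using wZ unfolding Ze by blast
  define \<delta> where "\<delta> = \<epsilon> / (2 * sqrt (real k))"
  have sk: "sqrt (real k) > 0" using k by simp
  have dpos: "\<delta> > 0" unfolding \<delta>_def using eps sk by simp
  define G where "G = PiE {..<k} (\<lambda>_. {- int N..int N})"
  define p where "p g = lc k (\<lambda>j. \<delta> * of_int (g j)) e" for g :: "nat \<Rightarrow> int"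
  have pert: "\<exists>z0. z0 \<in> Z \<and> vnorm n (\<lambda>i. p g i - z0 i) \<le> \<epsilon> / 2 \<and> (\<forall>l<m. vinner n (a l) z0 \<noteq> 0)" for g
  proof -
    have "\<exists>t>0. t * vnorm n w \<le> \<epsilon> / 2 \<and> (\<forall>l\<in>{..<m}. vinner n (a l) (\<lambda>i. p g i + t * w i) \<noteq> 0)"
      by (rule perturb) (use wa eps in auto)
    then obtain t where t0: "t > 0" and tw: "t * vnorm n w \<le> \<epsilon> / 2"
      and ta: "\<forall>l\<in>{..<m}. vinner n (a l) (\<lambda>i. p g i + t * w i) \<noteq> 0"
      by blast
    have inZ: "(\<lambda>i. p g i + t * w i) \<in> Z"
    proof -
      have "(\<lambda>i. p g i + t * w i) = lc k (\<lambda>j. \<delta> * of_int (g j) + t * d0 j) e"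
        unfolding p_def d0 lc_def by (simp add: distrib_right sum.distrib sum_distrib_left mult.assoc)
      then show ?thesis unfolding Ze by blast
    qed
    have "vnorm n (\<lambda>i. p g i - (p g i + t * w i)) = L2_set (\<lambda>i. t * w i) {..<n}"
      unfolding vnorm_L2 L2_set_def by simp
    also have "\<dots> = t * vnorm n w" unfolding vnorm_L2 using t0 by (simp add: L2_set_right_distrib)
    finally show ?thesis using inZ tw ta by auto
  qed
  then obtain f where f: "\<And>g. f g \<in> Z \<and> vnorm n (\<lambda>i. p g i - f g i) \<le> \<epsilon> / 2 \<and> (\<forall>l<m. vinner n (a l) (f g) \<noteq> 0)"
    by metis
  define Z0 where "Z0 = f ` G"
  have finG: "finite G" unfolding G_def by (simp add: finite_PiE)
  have cardG: "card G = (2 * N + 1) ^ k"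
    unfolding G_def by (simp add: card_PiE nat_add_distrib nat_mult_distrib)
  show ?thesis
  proof (intro exI[of _ Z0] conjI)
    show "Z0 \<subseteq> Z" unfolding Z0_def using f by blast
    show "finite Z0" unfolding Z0_def using finG by simp
    show "\<forall>z0\<in>Z0. \<forall>l<m. vinner n (a l) z0 \<noteq> 0" unfolding Z0_def using f by blast
    show "card Z0 \<le> (2 * N + 1) ^ k" unfolding Z0_def using card_image_le[OF finG, of f] cardG by simp
    show "\<forall>z\<in>Z. vnorm n z = 1 \<longrightarrow> (\<exists>z0\<in>Z0. vnorm n (\<lambda>i. z i - z0 i) \<le> \<epsilon>)"
    proof (intro ballI impI)
      fix z assume zZ: "z \<in> Z" and z1: "vnorm n z = 1"
      obtain c where zc: "z = lc k c e" using zZ unfolding Ze by blast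
      have Lc: "L2_set c {..<k} = 1" using z1 unfolding zc vnorm_lc[OF eON] .
      have cb: "\<bar>c j\<bar> \<le> 1" if "j < k" for j using L2_set_abs_le[of "{..<k}" j c] that Lc by simp
      define g where "g = restrict (\<lambda>j. \<lfloor>c j / \<delta>\<rfloor>) {..<k}"
      have Nge: "1 / \<delta> \<le> real N"
      proof -
        have "1 / \<delta> = 2 * sqrt (real k) / \<epsilon>" unfolding \<delta>_def by simp
        also have "\<dots> \<le> real_of_int \<lceil>2 * sqrt (real k) / \<epsilon>\<rceil>" by (rule le_of_int_ceiling)
        also have "\<dots> = real N"
        proof -
          have pos: "0 < 2 * sqrt (real k) / \<epsilon>" using eps sk by simp
          have c0: "0 \<le> \<lceil>2 * sqrt (real k) / \<epsilon>\<rceil>" by (subst zero_le_ceiling) (use pos in linarith)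
          then show ?thesis unfolding N by simp
        qed
        finally show ?thesis .
      qed
      have gG: "g \<in> G"
        unfolding G_def g_def
      proof (rule restrict_PiE_iff[THEN iffD2], intro ballI)
        fix j assume "j \<in> {..<k}"
        then have cj: "\<bar>c j\<bar> \<le> 1" using cb by simp
        have "\<bar>c j / \<delta>\<bar> \<le> 1 / \<delta>" using cj dpos by (simp add: divide_right_mono abs_divide)
        then have "\<bar>c j / \<delta>\<bar> \<le> real N" using Nge by linarith
        then have "- real N \<le> c j / \<delta>" "c j / \<delta> \<le> real N" by linarith+
        then have "- int N \<le> \<lfloor>c j / \<delta>\<rfloor>" "\<lfloor>c j / \<delta>\<rfloor> \<le> int N"
          by (simp_all add: le_floor_iff floor_le_iff)
        then show "\<lfloor>c j / \<delta>\<rfloor> \<in> {- int N..int N}" by simp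
      qed
      have d1: "vnorm n (\<lambda>i. z i - p g i) \<le> \<epsilon> / 2"
      proof -
        have "(\<lambda>i. z i - p g i) = lc k (\<lambda>j. c j - \<delta> * of_int (g j)) e"
          unfolding zc p_def lc_def by (simp add: left_diff_distrib sum_subtractf)
        then have "vnorm n (\<lambda>i. z i - p g i) = L2_set (\<lambda>j. c j - \<delta> * of_int (g j)) {..<k}"
          using vnorm_lc[OF eON] by simp
        also have "\<dots> \<le> L2_set (\<lambda>j. \<delta>) {..<k}"
        proof (rule L2_set_mono)
          fix j assume "j \<in> {..<k}"
          then have gj: "g j = \<lfloor>c j / \<delta>\<rfloor>" unfolding g_def by simp
          define r where "r = c j / \<delta>"
          have cr: "c j = \<delta> * r" unfolding r_def using dpos by simp
          have f1: "of_int \<lfloor>r\<rfloor> \<le> r" by (rule of_int_floor_le)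
          have f2: "r < of_int \<lfloor>r\<rfloor> + 1" by (rule real_of_int_floor_add_one_gt)
          have m1: "\<delta> * of_int \<lfloor>r\<rfloor> \<le> \<delta> * r" using f1 dpos by (intro mult_left_mono) auto
          have m2: "\<delta> * r \<le> \<delta> * (of_int \<lfloor>r\<rfloor> + 1)" using f2 dpos by (intro mult_left_mono) auto
          have m3: "\<delta> * (of_int \<lfloor>r\<rfloor> + 1) = \<delta> * of_int \<lfloor>r\<rfloor> + \<delta>" by (simp add: distrib_left)
          have gj': "real_of_int (g j) = of_int \<lfloor>r\<rfloor>" unfolding gj r_def by simp
          show "c j - \<delta> * of_int (g j) \<le> \<delta>" "0 \<le> c j - \<delta> * of_int (g j)"
            unfolding gj' cr using m1 m2 m3 by linarith+
        qed
        also have "\<dots> = sqrt (real k) * \<delta>" using dpos by (simp add: L2_set_constant)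
        also have "\<dots> = \<epsilon> / 2" unfolding \<delta>_def using sk by simp
        finally show ?thesis .
      qed
      have d2: "vnorm n (\<lambda>i. p g i - f g i) \<le> \<epsilon> / 2" using f by blast
      have "vnorm n (\<lambda>i. z i - f g i) = L2_set (\<lambda>i. (z i - p g i) + (p g i - f g i)) {..<n}"
        unfolding vnorm_L2 by simp
      also have "\<dots> \<le> vnorm n (\<lambda>i. z i - p g i) + vnorm n (\<lambda>i. p g i - f g i)"
        unfolding vnorm_L2 by (rule L2_set_triangle_ineq)
      also have "\<dots> \<le> \<epsilon>" using d1 d2 by simp
      finally show "\<exists>z0\<in>Z0. vnorm n (\<lambda>i. z i - z0 i) \<le> \<epsilon>"
        unfolding Z0_def using gG by blast
    qed
  qed
qed


lemma singleton_null:
  assumes "0 < \<sigma>"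
  shows "emeasure (density lborel (normal_density 0 \<sigma>)) {y0} = 0"
proof -
  have "emeasure (density lborel (normal_density 0 \<sigma>)) {y0} = (\<integral>\<^sup>+x. ennreal (normal_density 0 \<sigma> x) * indicator {y0} x \<partial>lborel)"
    by (subst emeasure_density) auto
  also have "\<dots> = (\<integral>\<^sup>+(x::real). 0 \<partial>lborel)"
  proof (rule nn_integral_cong_AE)
    show "AE x in lborel. ennreal (normal_density 0 \<sigma> x) * indicator {y0} x = 0"
      using AE_lborel_singleton[of y0] by eventually_elim auto
  qed
  finally show ?thesis by simp
qed

lemma null_hyperplane:
  fixes w :: "nat \<Rightarrow> real" and m :: nat
  assumes s: "0 < \<sigma>" and j0: "j0 < n" "w j0 \<noteq> 0" and l: "l < m"
  shows "emeasure (PiM ({..<m}\<times>{..<n}) (\<lambda>_. density lborel (normal_density 0 \<sigma>)))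
     {A \<in> space (PiM ({..<m}\<times>{..<n}) (\<lambda>_. density lborel (normal_density 0 \<sigma>))). (\<Sum>j<n. A(l,j) * w j) = 0} = 0"
proof -
  define M where "M = (\<lambda>_::nat\<times>nat. density lborel (normal_density 0 \<sigma>))"
  interpret product_prob_space M
    unfolding M_def product_prob_space_def product_sigma_finite_def
    using prob_space_normal_density[OF s]
    by (simp add: prob_space_imp_sigma_finite product_prob_space_axioms.intro)
  define I where "I = {..<m}\<times>{..<n} - {(l,j0)}"
  have II: "{..<m}\<times>{..<n} = insert (l,j0) I" using j0 l unfolding I_def by auto
  define N where "N = {A \<in> space (PiM ({..<m}\<times>{..<n}) M). (\<Sum>j<n. A(l,j) * w j) = 0}"
  have [measurable]: "(\<lambda>x. \<Sum>j<n. x(l,j)*w j) \<in> borel_measurable (PiM ({..<m}\<times>{..<n}) M)"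
    unfolding M_def using l by (auto intro!: borel_measurable_sum borel_measurable_times measurable_component_singleton)
  have Nm: "N \<in> sets (PiM ({..<m}\<times>{..<n}) M)" unfolding N_def by measurable
  have "emeasure (PiM ({..<m}\<times>{..<n}) M) N = (\<integral>\<^sup>+ A. indicator N A \<partial>PiM (insert (l,j0) I) M)"
    using Nm II by simp
  also have "\<dots> = (\<integral>\<^sup>+ x. (\<integral>\<^sup>+ y. indicator N (x((l,j0) := y)) \<partial>(M (l,j0))) \<partial>(Pi\<^sub>M I M))"
    apply (rule product_nn_integral_insert)
    using Nm II unfolding I_def by auto
  also have "\<dots> = (\<integral>\<^sup>+ x. 0 \<partial>(Pi\<^sub>M I M))"
  proof (rule nn_integral_cong)
    fix x assume x: "x \<in> space (Pi\<^sub>M I M)"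
    define y0 where "y0 = - (\<Sum>j\<in>{..<n}-{j0}. x(l,j) * w j) / w j0"
    have "(\<integral>\<^sup>+ y. indicator N (x((l,j0) := y)) \<partial>(M (l,j0))) \<le> (\<integral>\<^sup>+ y. indicator {y0} y \<partial>(M (l,j0)))"
    proof (rule nn_integral_mono)
      fix y assume "y \<in> space (M (l,j0))"
      have "y = y0" if h: "x((l,j0) := y) \<in> N"
      proof -
        have "(\<Sum>j<n. (x((l,j0) := y))(l,j) * w j) = 0" using h unfolding N_def by blast
        moreover have "(\<Sum>j<n. (x((l,j0) := y))(l,j) * w j) = y * w j0 + (\<Sum>j\<in>{..<n}-{j0}. x(l,j) * w j)"
          by (subst sum.remove[of _ j0]) (use j0 in auto)
        ultimately show ?thesis unfolding y0_def using j0 by (auto simp: field_simps)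
      qed
      then show "(indicator N (x((l,j0) := y)) :: ennreal) \<le> indicator {y0} y"
        by (auto split: split_indicator)
    qed
    also have "\<dots> = emeasure (M (l,j0)) {y0}"
      by (rule nn_integral_indicator) (simp add: M_def)
    also have "\<dots> = 0" unfolding M_def by (rule singleton_null[OF s])
    finally show "(\<integral>\<^sup>+ y. indicator N (x((l,j0) := y)) \<partial>(M (l,j0))) = 0" by simp
  qed
  finally show ?thesis unfolding N_def M_def by simp
qed


theorem lemma24:
  shows "\<exists>C2 c a (d::nat). C2 > 0 \<and> c > 0 \<and> a > 0 \<and>
     (\<forall>(\<epsilon>::real) (n::nat) (m::nat) (k::nat) Z.
        0 < \<epsilon> \<and> \<epsilon> < 1 \<and> subspace_dim n k Z \<and> real m \<ge> a * (1 / \<epsilon>) ^ d * real k \<longrightarrow>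
        (\<exists>S \<in> sets (gauss_matrix m n).
           S \<subseteq> {A \<in> space (gauss_matrix m n). event_E \<epsilon> m n k Z A} \<and>
           measure (gauss_matrix m n) S \<ge> 1 - C2 * exp (- c * \<epsilon> * real m)))"
proof -
  have main: "\<forall>(\<epsilon>::real) (n::nat) (m::nat) (k::nat) Z.
        0 < \<epsilon> \<and> \<epsilon> < 1 \<and> subspace_dim n k Z \<and> real m \<ge> 7 * (1 / \<epsilon>) ^ 1 * real k \<longrightarrow>
        (\<exists>S \<in> sets (gauss_matrix m n).
           S \<subseteq> {A \<in> space (gauss_matrix m n). event_E \<epsilon> m n k Z A} \<and>
           measure (gauss_matrix m n) S \<ge> 1 - 1 * exp (- 1 * \<epsilon> * real m))"
  proof (intro allI impI)
  fix \<epsilon> :: real and n m k :: nat and Z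
  assume H: "0 < \<epsilon> \<and> \<epsilon> < 1 \<and> subspace_dim n k Z \<and> real m \<ge> 7 * (1 / \<epsilon>) ^ 1 * real k"
  then have eps: "0 < \<epsilon>" "\<epsilon> < 1" and Z: "subspace_dim n k Z" and mk: "real m \<ge> 7 * real k / \<epsilon>"
    by auto
  let ?G = "gauss_matrix m n"
  show "\<exists>S \<in> sets ?G. S \<subseteq> {A \<in> space ?G. event_E \<epsilon> m n k Z A} \<and>
           measure ?G S \<ge> 1 - 1 * exp (- 1 * \<epsilon> * real m)"
  proof (cases "m = 0")
    case True
    then show ?thesis by (intro bexI[of _ "{}"]) auto
  next
    case False
    then have m1: "m \<ge> 1" by simp
    define \<sigma> where "\<sigma> = 1 / sqrt (real m)"
    have spos: "\<sigma> > 0" unfolding \<sigma>_def using m1 by simp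
    have PG: "prob_space ?G"
      unfolding gauss_matrix_def \<sigma>_def[symmetric]
      by (rule prob_space_PiM) (rule prob_space_normal_density[OF spos])
    interpret P: prob_space ?G by (rule PG)
    have ex_pos: "exp (- 1 * \<epsilon> * real m) > 0" by simp
    show ?thesis
    proof (cases "k = 0")
      case True
      have "Z = {\<lambda>i. 0}" using Z True unfolding subspace_dim_def by auto
      then have ev: "event_E \<epsilon> m n k Z A" for A
        unfolding event_E_def by (intro exI[of _ "{}"]) (auto simp: vnorm_def)
      show ?thesis
        by (intro bexI[of _ "space ?G"]) (use ev ex_pos P.prob_space in auto)
    next
      case False
      then have k1: "k \<ge> 1" by simp
      obtain v where vR: "\<forall>j<k. v j \<in> Rn n"
        and vind: "\<forall>c :: nat \<Rightarrow> real. (\<forall>i. (\<Sum>j<k. c j * v j i) = 0) \<longrightarrow> (\<forall>j<k. c j = 0)"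
        and Zv: "Z = {z. \<exists>c :: nat \<Rightarrow> real. z = (\<lambda>i. \<Sum>j<k. c j * v j i)}"
        using Z unfolding subspace_dim_def by blast
      define w where "w = v 0"
      define c0 where "c0 = (\<lambda>j::nat. if j = 0 then 1 else (0::real))"
      have c0w: "(\<lambda>i. \<Sum>j<k. c0 j * v j i) = w"
      proof (rule ext)
        fix i
        have "(\<Sum>j<k. c0 j * v j i) = (\<Sum>j<k. if j = 0 then v j i else 0)"
          unfolding c0_def by (intro sum.cong) auto
        also have "\<dots> = w i" using k1 unfolding w_def by (simp add: sum.delta)
        finally show "(\<Sum>j<k. c0 j * v j i) = w i" .
      qed
      have wZ: "w \<in> Z" unfolding Zv using c0w by blast
      have "\<exists>j0. w j0 \<noteq> 0"
      proof (rule ccontr)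
        assume "\<not> ?thesis"
        then have "\<forall>i. (\<Sum>j<k. c0 j * v j i) = 0" using c0w by (simp add: fun_eq_iff)
        then have "c0 0 = 0" using vind k1 by auto
        then show False unfolding c0_def by simp
      qed
      then obtain j0 where j0: "w j0 \<noteq> 0" by blast
      have j0n: "j0 < n"
      proof (rule ccontr)
        assume "\<not> j0 < n"
        then have "w j0 = 0" using vR k1 unfolding w_def Rn_def by auto
        then show False using j0 by simp
      qed
      define S where "S = {A \<in> space ?G. \<forall>l<m. vinner n (\<lambda>j. A (l, j)) w \<noteq> 0}"
      have meas_l [measurable]: "(\<lambda>A. \<Sum>j<n. A (l, j) * w j) \<in> borel_measurable ?G" if "l < m" for l
        unfolding gauss_matrix_def
        using that by (auto intro!: borel_measurable_sum borel_measurable_times measurable_component_singleton)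
      have Ssets: "S \<in> sets ?G"
      proof -
        have "S = {A \<in> space ?G. \<forall>l\<in>{..<m}. (\<Sum>j<n. A (l, j) * w j) \<noteq> 0}"
          unfolding S_def vinner_def by auto
        also have "\<dots> \<in> sets ?G"
        proof (rule sets.sets_Collect_finite_All)
          fix l assume "l \<in> {..<m}"
          then have "l < m" by simp
          note meas_l[OF this]
          then show "{A \<in> space ?G. (\<Sum>j<n. A (l, j) * w j) \<noteq> 0} \<in> sets ?G" by measurable
        qed auto
        finally show ?thesis .
      qed
      have AEl: "AE A in ?G. (\<Sum>j<n. A (l, j) * w j) \<noteq> 0" if l: "l < m" for l
      proof (subst AE_iff_measurable[OF _ refl])
        show "{x \<in> space ?G. \<not> (\<Sum>j<n. x (l, j) * w j) \<noteq> 0} \<in> sets ?G"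
          using meas_l[OF l] by measurable
        show "emeasure ?G {x \<in> space ?G. \<not> (\<Sum>j<n. x (l, j) * w j) \<noteq> 0} = 0"
          using null_hyperplane[of \<sigma> j0 n w l m, OF spos j0n j0 l] unfolding gauss_matrix_def \<sigma>_def by simp
      qed
      have "AE A in ?G. \<forall>l\<in>{..<m}. (\<Sum>j<n. A (l, j) * w j) \<noteq> 0"
        using AEl by (subst AE_ball_countable) auto
      then have "AE A in ?G. A \<in> S"
        using AE_space[of ?G] unfolding S_def vinner_def by eventually_elim auto
      then have PS: "P.prob S = 1" using P.prob_eq_1[OF Ssets] by simp
      define N where "N = nat \<lceil>2 * sqrt (real k) / \<epsilon>\<rceil>"
      have Nb: "real (2 * N + 1) \<le> real m ^ 2"
      proof -
        have pos: "0 < 2 * sqrt (real k) / \<epsilon>" using eps k1 by simp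
        have c0': "0 \<le> \<lceil>2 * sqrt (real k) / \<epsilon>\<rceil>" by (subst zero_le_ceiling) (use pos in linarith)
        have "real N = of_int \<lceil>2 * sqrt (real k) / \<epsilon>\<rceil>" unfolding N_def using c0' by simp
        also have "\<dots> \<le> 2 * sqrt (real k) / \<epsilon> + 1" by simp
        finally have N1: "real N \<le> 2 * sqrt (real k) / \<epsilon> + 1" .
        have kk: "real k \<le> real k * real k" by (metis of_nat_le_iff of_nat_mult le_square)
        have "sqrt (real k) \<le> sqrt (real k * real k)" using kk by (rule real_sqrt_le_mono)
        then have "sqrt (real k) \<le> real k" by simp
        then have X: "sqrt (real k) / \<epsilon> \<le> real k / \<epsilon>" using eps by (simp add: divide_right_mono)
        have Y: "1 \<le> real k / \<epsilon>" using k1 eps by (simp add: le_divide_eq)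
        have e1: "2 * sqrt (real k) / \<epsilon> = 2 * (sqrt (real k) / \<epsilon>)" by simp
        have e2: "7 * real k / \<epsilon> = 7 * (real k / \<epsilon>)" by simp
        have "real (2 * N + 1) \<le> 7 * real k / \<epsilon>" using N1 X Y unfolding e1 e2 by simp
        also have "\<dots> \<le> real m" using mk .
        also have "\<dots> \<le> real m ^ 2" using m1 by (simp add: power2_eq_square)
        finally show ?thesis .
      qed
      show ?thesis
      proof (intro bexI[of _ S] conjI)
        show "S \<in> sets ?G" by (rule Ssets)
        show "1 - 1 * exp (- 1 * \<epsilon> * real m) \<le> measure ?G S" using PS ex_pos by simp
        show "S \<subseteq> {A \<in> space ?G. event_E \<epsilon> m n k Z A}"
        proof
          fix A assume AS: "A \<in> S"
          then have wa: "\<forall>l<m. vinner n ((\<lambda>l j. A (l, j)) l) w \<noteq> 0" unfolding S_def by simp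
          obtain Z0 where Z0: "Z0 \<subseteq> Z" "finite Z0" "\<forall>z0\<in>Z0. \<forall>l<m. vinner n ((\<lambda>l j. A (l, j)) l) z0 \<noteq> 0"
            "card Z0 \<le> (2 * N + 1) ^ k"
            "\<forall>z\<in>Z. vnorm n z = 1 \<longrightarrow> (\<exists>z0\<in>Z0. vnorm n (\<lambda>i. z i - z0 i) \<le> \<epsilon>)"
            using net[OF Z k1 eps(1) wZ wa N_def] by blast
          have "real (card Z0) \<le> real ((2 * N + 1) ^ k)" using Z0(4) by linarith
          also have "\<dots> = real (2 * N + 1) ^ k" by simp
          also have "\<dots> \<le> (real m ^ 2) ^ k" by (rule power_mono[OF Nb]) simp
          also have "\<dots> = real m ^ (2 * k)" by (simp add: power_mult)
          also have "\<dots> \<le> 10 * real m ^ (2 * k)" by simp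
          finally have "real (card Z0) \<le> 10 * real m ^ (2 * k)" .
          then have "event_E \<epsilon> m n k Z A"
            unfolding event_E_def using Z0 by (intro exI[of _ Z0]) auto
          then show "A \<in> {A \<in> space ?G. event_E \<epsilon> m n k Z A}" using AS unfolding S_def by simp
        qed
      qed
    qed
  qed
qed
  show ?thesis
    apply (rule exI[of _ "1::real"], rule exI[of _ "1::real"], rule exI[of _ "7::real"], rule exI[of _ "1::nat"])
    using main by simp
qed

end
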